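(* Let $\lambda_1\ge\lambda_2\ge\dots\ge\lambda_r>0$ satisfy $\lambda_i\le\chi\lambda_{i+1}$ for all $i\in[r-1]$, for some $\chi>1$. Let $\eta>0$ and let $\gamma_0,\gamma_1,\dots>0$ be such that $\eta\gamma_j\lambda_1<1$ for all $j$. For $t\ge0$ and $i\in[r]$ define $P_i(t)=\prod_{j=0}^{t-1}(1-\eta\gamma_j\lambda_i)$. Fix $a_1\in(0,1)$ and set $a_2=e^{(a_1-1)/\chi}$. (a) For every $t$ and every $i\in[r-1]$: if $P_i(t)<a_1$, then $P_{i+1}(t)<a_2$. (b) Consequently, if $P_1(t)<a_2$ and $P_r(t)\ge a_1$, then there exists $i\in[r]$ with $a_1\le P_i(t)\le a_2$. In particular, (b) holds for all $t$ in the interval $[t_1,t_2)$, where $t_1$ is the first iteration with $P_1(t)<a_2$ and $t_2$ is the first iteration with $P_r(t)<a_1$.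
   Context: In the paper this is applied with $\gamma_j\lambda_i=\lambda_i(\tilde M(j))=v_i^\top\tilde M(j)v_i$. Here $\tilde M(j)=\gamma_jX^\top X$ with $\gamma_j>0$, and the $\lambda_i$ are the nonzero eigenvalues of $X^\top X$. *)

theory Defs
  imports Complex_Main
begin

definition Pprod :: "real \<Rightarrow> (nat \<Rightarrow> real) \<Rightarrow> (nat \<Rightarrow> real) \<Rightarrow> nat \<Rightarrow> nat \<Rightarrow> real" where
  "Pprod eta gam lam i t = (\<Prod>j<t. 1 - eta * gam j * lam i)"

end

theory Submission
  imports Defs
begin

lemma weier:
  fixes y :: "nat \<Rightarrow> real"
  assumes "\<And>j. 0 \<le> y j \<and> y j \<le> 1"
  shows "0 \<le> (\<Prod>j<t. 1 - y j) \<and> (\<Prod>j<t. 1 - y j) \<le> 1 \<and> 1 - (\<Sum>j<t. y j) \<le> (\<Prod>j<t. 1 - y j)"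
proof (induction t)
  case 0 then show ?case by simp
next
  case (Suc t)
  define P where "P = (\<Prod>j<t. 1 - y j)"
  define S where "S = (\<Sum>j<t. y j)"
  have h: "0 \<le> P" "P \<le> 1" "1 - S \<le> P" using Suc by (auto simp: P_def S_def)
  have y: "0 \<le> y t" "y t \<le> 1" using assms by auto
  have "P * (1 - y t) \<ge> 0" using h y by simp
  moreover have "P * (1 - y t) \<le> 1" using h y by (simp add: mult_le_one)
  moreover have "P * y t \<le> y t" using h y by (simp add: mult_left_le_one_le)
  hence "1 - (S + y t) \<le> P * (1 - y t)" using h by (simp add: algebra_simps)
  ultimately show ?case by (simp add: P_def[symmetric] S_def[symmetric])
qed

lemma expbound:
  fixes x :: "nat \<Rightarrow> real"
  assumes "\<And>j. 0 \<le> x j \<and> x j \<le> 1"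
  shows "(\<Prod>j<t. 1 - x j) \<le> exp (- (\<Sum>j<t. x j))"
proof -
  have "(\<Prod>j<t. 1 - x j) \<le> (\<Prod>j<t. exp (- x j))"
    apply (rule prod_mono)
    using assms exp_ge_add_one_self[of "- x _"] by auto
  also have "\<dots> = exp (- (\<Sum>j<t. x j))" by (simp add: exp_sum[symmetric] sum_negf)
  finally show ?thesis .
qed

theorem mainTheorem4:
  fixes lam gam :: "nat \<Rightarrow> real" and r :: nat and chi eta a1 a2 :: real
  assumes r_pos: "r \<ge> 1"
    and lam_mono: "\<And>i. 1 \<le> i \<Longrightarrow> i < r \<Longrightarrow> lam i \<ge> lam (i + 1)"
    and lam_pos: "lam r > 0"
    and chi_gt: "chi > 1"
    and lam_ratio: "\<And>i. 1 \<le> i \<Longrightarrow> i < r \<Longrightarrow> lam i \<le> chi * lam (i + 1)"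
    and eta_pos: "eta > 0"
    and gamma_pos: "\<And>j. gam j > 0"
    and step: "\<And>j. eta * gam j * lam 1 < 1"
    and a1: "0 < a1" "a1 < 1"
    and a2_def: "a2 = exp ((a1 - 1) / chi)"
  shows
    "(\<forall>t. \<forall>i. 1 \<le> i \<and> i < r \<longrightarrow>
        Pprod eta gam lam i t < a1 \<longrightarrow> Pprod eta gam lam (i + 1) t < a2)
     \<and> (\<forall>t. Pprod eta gam lam 1 t < a2 \<and> Pprod eta gam lam r t \<ge> a1 \<longrightarrow>
        (\<exists>i. 1 \<le> i \<and> i \<le> r \<and> a1 \<le> Pprod eta gam lam i t \<and> Pprod eta gam lam i t \<le> a2))
     \<and> (\<forall>t1 t2 t.
        Pprod eta gam lam 1 t1 < a2 \<and> (\<forall>s<t1. \<not> Pprod eta gam lam 1 s < a2) \<and>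
        Pprod eta gam lam r t2 < a1 \<and> (\<forall>s<t2. \<not> Pprod eta gam lam r s < a1) \<and>
        t1 \<le> t \<and> t < t2 \<longrightarrow>
        Pprod eta gam lam 1 t < a2 \<and> Pprod eta gam lam r t \<ge> a1 \<and>
        (\<exists>i. 1 \<le> i \<and> i \<le> r \<and> a1 \<le> Pprod eta gam lam i t \<and> Pprod eta gam lam i t \<le> a2))"
proof -
  let ?P = "Pprod eta gam lam"
  have lge: "lam i \<ge> lam r" if "1 \<le> i" "i \<le> r" for i
    using that
  proof (induction "r - i" arbitrary: i)
    case 0 then show ?case by simp
  next
    case (Suc k)
    then have "lam (i+1) \<ge> lam r" by simp
    moreover have "lam i \<ge> lam (i+1)" using Suc lam_mono by simp
    ultimately show ?case by simp
  qed
  have lle: "lam i \<le> lam 1" if "1 \<le> i" "i \<le> r" for i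
    using that
  proof (induction i rule: nat_induct_at_least)
    case base then show ?case by simp
  next
    case (Suc n) then show ?case using lam_mono[of n] by simp
  qed
  have lpos: "lam i > 0" if "1 \<le> i" "i \<le> r" for i using lge[OF that] lam_pos by simp
  have fac: "0 \<le> eta * gam j * lam i \<and> eta * gam j * lam i \<le> 1" if "1 \<le> i" "i \<le> r" for i j
  proof -
    have m: "eta * gam j * lam i \<le> eta * gam j * lam 1"
      using lle[OF that] eta_pos gamma_pos[of j] by (intro mult_left_mono) simp_all
    have "0 \<le> eta * gam j * lam i" using lpos[OF that] eta_pos gamma_pos[of j] by simp
    thus ?thesis using m step[of j] by linarith
  qed
  have A: "?P (i+1) t < a2" if i: "1 \<le> i" "i < r" and lt: "?P i t < a1" for i t
  proof -
    define S where "S = (\<Sum>j<t. eta * gam j * lam (i+1))"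
    have "1 - (\<Sum>j<t. eta * gam j * lam i) \<le> ?P i t"
      using weier[of "\<lambda>j. eta * gam j * lam i" t] fac[of i] i by (simp add: Pprod_def)
    moreover have "(\<Sum>j<t. eta * gam j * lam i) \<le> chi * S"
      unfolding S_def sum_distrib_left
    proof (rule sum_mono)
      fix j
      have "eta * gam j * lam i \<le> eta * gam j * (chi * lam (i+1))"
        using lam_ratio[OF i] eta_pos gamma_pos[of j] by (simp add: mult_left_mono)
      thus "eta * gam j * lam i \<le> chi * (eta * gam j * lam (i + 1))" by (simp add: algebra_simps)
    qed
    ultimately have "1 - chi * S < a1" using lt by simp
    hence "(1 - a1) / chi < S" using chi_gt by (simp add: field_simps)
    hence "- S < (a1 - 1) / chi" proof -
      have "(a1 - 1) / chi = - ((1 - a1) / chi)" by (metis minus_diff_eq minus_divide_left)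
      thus ?thesis using \<open>(1 - a1) / chi < S\<close> by linarith
    qed
    hence "exp (- S) < a2" unfolding a2_def by simp
    moreover have "?P (i+1) t \<le> exp (- S)"
      unfolding S_def Pprod_def
      using expbound[of "\<lambda>j. eta * gam j * lam (i+1)" t] fac[of "i+1"] i by simp
    ultimately show ?thesis by simp
  qed
  have B: "\<exists>i. 1 \<le> i \<and> i \<le> r \<and> a1 \<le> ?P i t \<and> ?P i t \<le> a2"
    if h1: "?P 1 t < a2" and h2: "?P r t \<ge> a1" for t
  proof -
    define i where "i = (LEAST i. 1 \<le> i \<and> a1 \<le> ?P i t)"
    have ex: "1 \<le> r \<and> a1 \<le> ?P r t" using r_pos h2 by simp
    have i1: "1 \<le> i \<and> a1 \<le> ?P i t" unfolding i_def by (rule LeastI[where P="\<lambda>i. 1 \<le> i \<and> a1 \<le> ?P i t", OF ex])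
    have ir: "i \<le> r" unfolding i_def by (rule Least_le[where P="\<lambda>i. 1 \<le> i \<and> a1 \<le> ?P i t", OF ex])
    have "?P i t \<le> a2"
    proof (cases "i = 1")
      case True then show ?thesis using h1 by simp
    next
      case False
      then have g: "i - 1 \<ge> 1" using i1 by linarith
      have "i - 1 < (LEAST i. 1 \<le> i \<and> a1 \<le> ?P i t)" using i1 unfolding i_def[symmetric] by linarith
      hence "\<not> (1 \<le> i - 1 \<and> a1 \<le> ?P (i-1) t)" by (rule not_less_Least)
      hence "?P (i-1) t < a1" using g by simp
      moreover have "i - 1 < r" using ir i1 by linarith
      ultimately have "?P (i - 1 + 1) t < a2" using A g by blast
      moreover have "i - 1 + 1 = i" using i1 by linarith
      ultimately show ?thesis by simp
    qed
    thus ?thesis using i1 ir by blast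
  qed
  have mono1: "?P 1 t \<le> ?P 1 s" if "s \<le> t" for s t
    using that
  proof (induction t rule: dec_induct)
    case base then show ?case by simp
  next
    case (step n)
    have f: "0 \<le> eta * gam n * lam 1 \<and> eta * gam n * lam 1 \<le> 1" using fac r_pos by simp
    have "0 \<le> ?P 1 n" using weier[of "\<lambda>j. eta * gam j * lam 1" n] fac r_pos
      by (simp add: Pprod_def)
    hence "?P 1 n * (1 - eta * gam n * lam 1) \<le> ?P 1 n" using f
      by (intro mult_left_le) simp_all
    thus ?case using step by (simp add: Pprod_def)
  qed
  show ?thesis
  proof (intro conjI allI impI)
    fix t i assume "1 \<le> i \<and> i < r" "?P i t < a1"
    thus "?P (i+1) t < a2" using A by blast
  next
    fix t assume "?P 1 t < a2 \<and> ?P r t \<ge> a1"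
    thus "\<exists>i. 1 \<le> i \<and> i \<le> r \<and> a1 \<le> ?P i t \<and> ?P i t \<le> a2" using B by blast
  next
    fix t1 t2 t assume h: "?P 1 t1 < a2 \<and> (\<forall>s<t1. \<not> ?P 1 s < a2) \<and>
        ?P r t2 < a1 \<and> (\<forall>s<t2. \<not> ?P r s < a1) \<and> t1 \<le> t \<and> t < t2"
    show c1: "?P 1 t < a2" using h mono1[of t1 t] by simp
    show c2: "?P r t \<ge> a1" using h by (meson not_less)
    show "\<exists>i. 1 \<le> i \<and> i \<le> r \<and> a1 \<le> ?P i t \<and> ?P i t \<le> a2" using B c1 c2 by blast
  qed
qed

end
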